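(* Let $\mathbb{K}$ be a field, let $A\in\mathbb{K}[x]^{m\times n}$ have full rank $m\le n$, let $s\in\mathbb{Z}^n$, let $P\in\mathbb{K}[x]^{m\times n}$ be the $s$-Popov form of $A$, and let $\pi=\rho_s(A)$ be the $s$-pivot index of $P$. Then $A_{*,\pi}\in\mathbb{K}[x]^{m\times m}$ is nonsingular, $P_{*,\pi}$ is its $s_\pi$-Popov form, and $U=P_{*,\pi}A_{*,\pi}^{-1}\in\mathbb{K}[x]^{m\times m}$ is the unique unimodular matrix such that $UA=P$. Furthermore: (i) $\deg(P)\le\deg(A)+\mathrm{amp}(s)$; (ii) for $1\le i\le m$, the $i$th column of $U$ has degree at most $|\mathrm{rdeg}(A)|-\deg(A_{i,*})$; (iii) $\deg(U)\le|\mathrm{cdeg}(A_{*,\pi})|$; (iv) $\deg(P)\le\min(|\mathrm{rdeg}(A)|,|\mathrm{cdeg}(A')|)\le m\deg(A)$, where $A'$ is $A$ with its zero columns removed.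
   Context: For a tuple $t=(t_1,\dots,t_k)$, $|t|=t_1+\dots+t_k$ and $\mathrm{amp}(t)=\max(t)-\min(t)$. $\mathrm{rdeg}(M)$ and $\mathrm{cdeg}(M)$ are the tuples of row degrees and column degrees of $M$; $\deg(M)$ is the maximum degree of its entries; $A_{i,*}$ is the $i$th row, $A_{*,J}$ the submatrix of columns indexed by the tuple $J$, and $s_J$ the corresponding subtuple of $s$. A square polynomial matrix is unimodular if it has an inverse with polynomial entries. For a shift $s\in\mathbb{Z}^n$ and a nonzero row $p=[p_1,\dots,p_n]\in\mathbb{K}[x]^{1\times n}$, the $s$-degree is $\max_j(\deg(p_j)+s_j)$, the $s$-pivot index is the largest $j$ with $\deg(p_j)+s_j$ equal to the $s$-degree, and $p_j$ is the $s$-pivot entry. A matrix $P\in\mathbb{K}[x]^{k\times n}$ is in $s$-Popov form if it has no zero row, the $s$-pivot indices of its rows are strictly increasing, its $s$-pivot entries are monic, and in each column containing an $s$-pivot entry all other entries have degree strictly less than that $s$-pivot entry. The $s$-Popov form of a matrix $A$ of rank $r$ is the unique matrix in $\mathbb{K}[x]^{r\times n}$ in $s$-Popov form whose rows generate the same $\mathbb{K}[x]$-module as those of $A$; $\rho_s(A)$, the $s$-pivot support of $A$, is the tuple of $s$-pivot indices of the rows of this form. *)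

theory Defs
  imports "Jordan_Normal_Form.Determinant" "HOL-Computational_Algebra.Polynomial"
          "HOL-Library.Extended_Real"
begin

text \<open>Polynomial matrices are Jordan_Normal_Form matrices of type 'a poly mat
  (indices are 0-based). Degrees take values in ereal, with the degree of the
  zero polynomial (and the maximum over an empty set) equal to minus infinity.\<close>

definition pdeg :: "'a::zero poly \<Rightarrow> ereal" where
  "pdeg p = (if p = 0 then -\<infinity> else ereal (real (degree p)))"

definition vdeg :: "'a::zero poly vec \<Rightarrow> ereal" where
  "vdeg v = Sup {pdeg (v $ j) | j. j < dim_vec v}"

definition mdeg :: "'a::zero poly mat \<Rightarrow> ereal" where
  "mdeg M = Sup {pdeg (M $$ (i, j)) | i j. i < dim_row M \<and> j < dim_col M}"

definition sum_rdeg :: "'a::zero poly mat \<Rightarrow> ereal" where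
  "sum_rdeg M = (\<Sum>i<dim_row M. vdeg (row M i))"

definition sum_cdeg :: "'a::zero poly mat \<Rightarrow> ereal" where
  "sum_cdeg M = (\<Sum>j<dim_col M. vdeg (col M j))"

definition amp :: "nat \<Rightarrow> (nat \<Rightarrow> int) \<Rightarrow> int" where
  "amp n s = Max (s ` {..<n}) - Min (s ` {..<n})"

definition colsel :: "'a mat \<Rightarrow> nat list \<Rightarrow> 'a mat" where
  "colsel M J = mat (dim_row M) (length J) (\<lambda>(i, k). M $$ (i, J ! k))"

definition subshift :: "(nat \<Rightarrow> int) \<Rightarrow> nat list \<Rightarrow> nat \<Rightarrow> int" where
  "subshift s J = (\<lambda>k. s (J ! k))"

definition nonzero_cols :: "'a::zero mat \<Rightarrow> 'a mat" where
  "nonzero_cols M = colsel M (filter (\<lambda>j. col M j \<noteq> 0\<^sub>v (dim_row M)) [0..<dim_col M])"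

definition sdeg :: "(nat \<Rightarrow> int) \<Rightarrow> 'a::zero poly vec \<Rightarrow> ereal" where
  "sdeg s p = Sup {pdeg (p $ j) + ereal (real_of_int (s j)) | j. j < dim_vec p}"

definition spiv :: "(nat \<Rightarrow> int) \<Rightarrow> 'a::zero poly vec \<Rightarrow> nat" where
  "spiv s p = (GREATEST j. j < dim_vec p \<and> p $ j \<noteq> 0 \<and>
                  pdeg (p $ j) + ereal (real_of_int (s j)) = sdeg s p)"

definition is_popov :: "(nat \<Rightarrow> int) \<Rightarrow> 'a::{zero,one} poly mat \<Rightarrow> bool" where
  "is_popov s P \<longleftrightarrow>
     (\<forall>i < dim_row P. row P i \<noteq> 0\<^sub>v (dim_col P)) \<and>
     (\<forall>i i'. i < i' \<and> i' < dim_row P \<longrightarrow> spiv s (row P i) < spiv s (row P i')) \<and>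
     (\<forall>i < dim_row P. lead_coeff (P $$ (i, spiv s (row P i))) = 1) \<and>
     (\<forall>i < dim_row P. \<forall>i' < dim_row P. i' \<noteq> i \<longrightarrow>
        pdeg (P $$ (i', spiv s (row P i))) < pdeg (P $$ (i, spiv s (row P i))))"

definition rowmod :: "'a::comm_ring_1 poly mat \<Rightarrow> 'a poly vec set" where
  "rowmod M = {transpose_mat M *\<^sub>v v | v. v \<in> carrier_vec (dim_row M)}"

text \<open>full row rank: the rows are linearly independent (over K[x], equivalently K(x))\<close>
definition full_row_rank :: "'a::comm_ring_1 poly mat \<Rightarrow> bool" where
  "full_row_rank M \<longleftrightarrow> (\<forall>v \<in> carrier_vec (dim_row M).
      transpose_mat M *\<^sub>v v = 0\<^sub>v (dim_col M) \<longrightarrow> v = 0\<^sub>v (dim_row M))"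

definition is_popov_form_of :: "(nat \<Rightarrow> int) \<Rightarrow> 'a::comm_ring_1 poly mat \<Rightarrow> 'a poly mat \<Rightarrow> bool" where
  "is_popov_form_of s P M \<longleftrightarrow> P \<in> carrier_mat (dim_row M) (dim_col M) \<and>
      is_popov s P \<and> rowmod P = rowmod M"

definition pivots :: "(nat \<Rightarrow> int) \<Rightarrow> 'a::zero poly mat \<Rightarrow> nat list" where
  "pivots s P = map (\<lambda>i. spiv s (row P i)) [0..<dim_row P]"

definition unimodular :: "'a::comm_ring_1 poly mat \<Rightarrow> bool" where
  "unimodular U \<longleftrightarrow> (\<exists>V \<in> carrier_mat (dim_row U) (dim_row U).
      U \<in> carrier_mat (dim_row U) (dim_row U) \<and>
      U * V = 1\<^sub>m (dim_row U) \<and> V * U = 1\<^sub>m (dim_row U))"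

end

theory Submission
  imports Defs
begin


lemma pdeg_le_degree: "pdeg p \<le> ereal (real (degree p))" by (simp add: pdeg_def)
lemma pdeg_nz: "p \<noteq> 0 \<Longrightarrow> pdeg p = ereal (real (degree p))" by (simp add: pdeg_def)
lemma pdeg_z[simp]: "pdeg 0 = -\<infinity>" by (simp add: pdeg_def)

definition vdn :: "'a::zero poly vec \<Rightarrow> nat" where
  "vdn v = Max (insert 0 ((\<lambda>j. degree (v $ j)) ` {..<dim_vec v}))"

lemma vdn_ge: "j < dim_vec v \<Longrightarrow> degree (v $ j) \<le> vdn v"
  unfolding vdn_def by (rule Max_ge) auto

lemma vdeg_le: "vdeg v \<le> ereal (real (vdn v))"
  unfolding vdeg_def
proof (rule Sup_least, clarify)
  fix j assume "j < dim_vec v"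
  then show "pdeg (v $ j) \<le> ereal (real (vdn v))"
    using pdeg_le_degree[of "v$j"] vdn_ge[of j v] by (meson ereal_less_eq(3) of_nat_le_iff order_trans)
qed

lemma vdeg_eq: assumes "v \<noteq> 0\<^sub>v (dim_vec v)" shows "vdeg v = ereal (real (vdn v))"
proof (rule antisym[OF vdeg_le])
  obtain j0 where j0: "j0 < dim_vec v" "v $ j0 \<noteq> 0" using assms by (metis eq_vecI index_zero_vec(1,2))
  have up: "pdeg (v $ j) \<le> vdeg v" if "j < dim_vec v" for j
    unfolding vdeg_def by (rule Sup_upper) (use that in auto)
  show "ereal (real (vdn v)) \<le> vdeg v"
  proof (cases "vdn v = 0")
    case True
    then show ?thesis by (rule_tac order_trans[OF _ up[OF j0(1)]]) (simp add: pdeg_nz j0)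
  next
    case False
    have "vdn v \<in> insert 0 ((\<lambda>j. degree (v $ j)) ` {..<dim_vec v})"
      unfolding vdn_def by (rule Max_in) auto
    with False obtain j where j: "j < dim_vec v" "vdn v = degree (v $ j)" by auto
    with False have "v $ j \<noteq> 0" by auto
    then show ?thesis using up[OF j(1)] j by (simp add: pdeg_nz)
  qed
qed

lemma mdeg_upper: "i < dim_row M \<Longrightarrow> j < dim_col M \<Longrightarrow> pdeg (M $$ (i,j)) \<le> mdeg M"
  unfolding mdeg_def by (rule Sup_upper) auto

lemma mdeg_least: "(\<And>i j. i < dim_row M \<Longrightarrow> j < dim_col M \<Longrightarrow> pdeg (M $$ (i,j)) \<le> b) \<Longrightarrow> mdeg M \<le> b"
  unfolding mdeg_def by (rule Sup_least) auto

lemma mdeg_le_nat: "(\<And>i j. i < dim_row M \<Longrightarrow> j < dim_col M \<Longrightarrow> degree (M $$ (i,j)) \<le> k) \<Longrightarrow> mdeg M \<le> ereal (real k)"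
  by (rule mdeg_least) (meson pdeg_le_degree ereal_less_eq(3) of_nat_le_iff order_trans)

lemma vdeg_le_nat: "(\<And>j. j < dim_vec v \<Longrightarrow> degree (v $ j) \<le> k) \<Longrightarrow> vdeg v \<le> ereal (real k)"
  unfolding vdeg_def by (rule Sup_least) (auto intro: order_trans[OF pdeg_le_degree])

lemma vdeg_row_le_mdeg: "i < dim_row M \<Longrightarrow> vdeg (row M i) \<le> mdeg M"
  unfolding vdeg_def by (rule Sup_least) (auto intro: mdeg_upper)

lemma sdeg_upper: "j < dim_vec p \<Longrightarrow> pdeg (p $ j) + ereal (real_of_int (s j)) \<le> sdeg s p"
  unfolding sdeg_def by (rule Sup_upper) auto

lemma sdeg_attained: assumes "p \<noteq> 0\<^sub>v (dim_vec p)"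
  shows "\<exists>j<dim_vec p. p $ j \<noteq> 0 \<and> pdeg (p $ j) + ereal (real_of_int (s j)) = sdeg s p"
proof -
  obtain j0 where j0: "j0 < dim_vec p" "p $ j0 \<noteq> 0" using assms by (metis eq_vecI index_zero_vec(1,2))
  let ?S = "{pdeg (p $ j) + ereal (real_of_int (s j)) | j. j < dim_vec p}"
  have fin: "finite ?S" by simp
  have ne: "?S \<noteq> {}" using j0 by auto
  have "Sup ?S \<in> ?S"
    by (rule finite_Sup_in[OF fin ne]) (auto simp: sup_max max_def)
  then obtain j where j: "j < dim_vec p" "pdeg (p $ j) + ereal (real_of_int (s j)) = sdeg s p"
    unfolding sdeg_def by auto
  have "sdeg s p \<ge> pdeg (p $ j0) + ereal (real_of_int (s j0))" by (rule sdeg_upper[OF j0(1)])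
  then have "sdeg s p \<noteq> -\<infinity>" using j0 by (auto simp: pdeg_nz)
  then have "p $ j \<noteq> 0" using j by auto
  then show ?thesis using j by blast
qed

abbreviation ideg :: "(nat \<Rightarrow> int) \<Rightarrow> 'a::zero poly vec \<Rightarrow> nat \<Rightarrow> int" where
  "ideg s p j \<equiv> int (degree (p $ j)) + s j"

lemma ereal_ideg: "p $ j \<noteq> 0 \<Longrightarrow> pdeg (p $ j) + ereal (real_of_int (s j)) = ereal (real_of_int (ideg s p j))"
  by (simp add: pdeg_nz)

lemma spiv_props: assumes nz: "p \<noteq> 0\<^sub>v (dim_vec p)"
  shows "spiv s p < dim_vec p" "p $ spiv s p \<noteq> 0"
    "\<And>i. i < dim_vec p \<Longrightarrow> p $ i \<noteq> 0 \<Longrightarrow> ideg s p i \<le> ideg s p (spiv s p)"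
    "\<And>i. i < dim_vec p \<Longrightarrow> spiv s p < i \<Longrightarrow> p $ i \<noteq> 0 \<Longrightarrow> ideg s p i < ideg s p (spiv s p)"
proof -
  let ?Q = "\<lambda>j. j < dim_vec p \<and> p $ j \<noteq> 0 \<and> pdeg (p $ j) + ereal (real_of_int (s j)) = sdeg s p"
  obtain j where j: "?Q j" using sdeg_attained[OF nz] by blast
  have bd: "\<And>y. ?Q y \<Longrightarrow> y \<le> dim_vec p" by auto
  have Q: "?Q (spiv s p)" unfolding spiv_def by (rule GreatestI_nat[of ?Q, OF j bd]) 
  have mx: "\<And>y. ?Q y \<Longrightarrow> y \<le> spiv s p" unfolding spiv_def by (rule Greatest_le_nat[of ?Q, OF _ bd])
  show "spiv s p < dim_vec p" "p $ spiv s p \<noteq> 0" using Q by auto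
  have eq: "sdeg s p = ereal (real_of_int (ideg s p (spiv s p)))" using Q ereal_ideg[of p "spiv s p" s] by auto
  show "ideg s p i \<le> ideg s p (spiv s p)" if "i < dim_vec p" "p $ i \<noteq> 0" for i
    using sdeg_upper[OF that(1), of s] ereal_ideg[OF that(2), of s] eq by simp
  show "ideg s p i < ideg s p (spiv s p)" if "i < dim_vec p" "spiv s p < i" "p $ i \<noteq> 0" for i
  proof -
    have le: "ideg s p i \<le> ideg s p (spiv s p)"
      using sdeg_upper[OF that(1), of s] ereal_ideg[OF that(3), of s] eq by simp
    have "ideg s p i \<noteq> ideg s p (spiv s p)"
    proof
      assume "ideg s p i = ideg s p (spiv s p)"
      then have "?Q i" using that eq ereal_ideg[OF that(3), of s] by simp
      then show False using mx that(2) by fastforce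
    qed
    then show ?thesis using le by simp
  qed
qed

lemma spiv_eqI: assumes j: "j < dim_vec p" "p $ j \<noteq> 0"
  and le: "\<And>i. i < dim_vec p \<Longrightarrow> p $ i \<noteq> 0 \<Longrightarrow> ideg s p i \<le> ideg s p j"
  and lt: "\<And>i. i < dim_vec p \<Longrightarrow> j < i \<Longrightarrow> p $ i \<noteq> 0 \<Longrightarrow> ideg s p i < ideg s p j"
  shows "spiv s p = j"
proof -
  have eq: "sdeg s p = ereal (real_of_int (ideg s p j))"
  proof (rule antisym)
    show "sdeg s p \<le> ereal (real_of_int (ideg s p j))"
      unfolding sdeg_def
    proof (rule Sup_least, clarify)
      fix i assume i: "i < dim_vec p"
      show "pdeg (p $ i) + ereal (real_of_int (s i)) \<le> ereal (real_of_int (ideg s p j))"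
      proof (cases "p $ i = 0")
        case True then show ?thesis by simp
      next
        case False then show ?thesis using le[OF i False] ereal_ideg[OF False, of s] by simp
      qed
    qed
    show "ereal (real_of_int (ideg s p j)) \<le> sdeg s p"
      using sdeg_upper[OF j(1), of s] ereal_ideg[OF j(2), of s] by simp
  qed
  show ?thesis unfolding spiv_def
  proof (rule Greatest_equality)
    show "j < dim_vec p \<and> p $ j \<noteq> 0 \<and> pdeg (p $ j) + ereal (real_of_int (s j)) = sdeg s p"
      using j eq ereal_ideg[OF j(2), of s] by simp
    fix y assume y: "y < dim_vec p \<and> p $ y \<noteq> 0 \<and> pdeg (p $ y) + ereal (real_of_int (s y)) = sdeg s p"
    show "y \<le> j"
    proof (rule ccontr)
      assume "\<not> y \<le> j"
      then have "ideg s p y < ideg s p j" using lt y by auto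
      then show False using y eq ereal_ideg[of p y s] by simp
    qed
  qed
qed



lemma row_in_rowmod: assumes "i < dim_row B" shows "row B i \<in> rowmod B"
proof -
  have "row B i = transpose_mat B *\<^sub>v unit_vec (dim_row B) i"
    by (rule eq_vecI) (use assms in \<open>auto simp: scalar_prod_right_unit\<close>)
  then show ?thesis unfolding rowmod_def by auto
qed

lemma rowmod_factor: assumes B: "B \<in> carrier_mat k n" and C: "C \<in> carrier_mat m n"
  and sub: "rowmod B \<subseteq> rowmod C"
  shows "\<exists>X \<in> carrier_mat k m. B = X * C"
proof -
  have "\<forall>i<k. \<exists>v. v \<in> carrier_vec m \<and> row B i = transpose_mat C *\<^sub>v v"
    using row_in_rowmod[of _ B] sub B C unfolding rowmod_def by fastforce
  then obtain f where f: "\<And>i. i < k \<Longrightarrow> f i \<in> carrier_vec m \<and> row B i = transpose_mat C *\<^sub>v f i"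
    by metis
  define X where "X = mat k m (\<lambda>(i,l). f i $ l)"
  have "B = X * C"
  proof (rule eq_matI)
    fix i j assume ij: "i < dim_row (X * C)" "j < dim_col (X * C)"
    then have i: "i < k" and j: "j < n" using C by (auto simp: X_def)
    have "B $$ (i,j) = row B i $ j" using B i j by auto
    also have "\<dots> = (transpose_mat C *\<^sub>v f i) $ j" using f[OF i] by simp
    also have "\<dots> = col C j \<bullet> f i" using C j by auto
    also have "\<dots> = f i \<bullet> col C j" using f[OF i] C j by (metis carrier_vecI col_dim comm_scalar_prod carrier_matD(1))
    also have "\<dots> = row X i \<bullet> col C j"
      by (rule arg_cong[where f="\<lambda>v. v \<bullet> col C j"]) (use f[OF i] i in \<open>auto simp: X_def\<close>)
    also have "\<dots> = (X * C) $$ (i,j)" using i j C by (simp add: X_def)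
    finally show "B $$ (i,j) = (X * C) $$ (i,j)" .
  qed (use B C in \<open>auto simp: X_def\<close>)
  moreover have "X \<in> carrier_mat k m" by (simp add: X_def)
  ultimately show ?thesis by blast
qed

lemma rowmod_mult: assumes X: "X \<in> carrier_mat k m" and C: "C \<in> carrier_mat m n"
  shows "rowmod (X * C) \<subseteq> rowmod C"
proof
  fix w assume "w \<in> rowmod (X * C)"
  then obtain v where v: "v \<in> carrier_vec k" "w = transpose_mat (X * C) *\<^sub>v v"
    unfolding rowmod_def using X by auto
  have "transpose_mat (X * C) = transpose_mat C * transpose_mat X"
    using X C by (simp add: transpose_mult)
  then have "w = transpose_mat C *\<^sub>v (transpose_mat X *\<^sub>v v)"
    using v X C by (simp add: assoc_mult_mat_vec[of _ n m _ k])
  moreover have "transpose_mat X *\<^sub>v v \<in> carrier_vec (dim_row C)" using X C unfolding carrier_vec_def by simp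
  ultimately show "w \<in> rowmod C" unfolding rowmod_def by auto
qed

lemma colsel_carrier[simp]: "colsel M J \<in> carrier_mat (dim_row M) (length J)"
  by (simp add: colsel_def)

lemma colsel_dims[simp]: "dim_row (colsel M J) = dim_row M" "dim_col (colsel M J) = length J"
  by (auto simp: colsel_def)

lemma colsel_index[simp]: "i < dim_row M \<Longrightarrow> k < length J \<Longrightarrow> colsel M J $$ (i,k) = M $$ (i, J ! k)"
  by (simp add: colsel_def)

lemma colsel_mult: assumes X: "X \<in> carrier_mat k m" and C: "C \<in> carrier_mat m n"
  and J: "\<And>l. l < length J \<Longrightarrow> J ! l < n"
  shows "colsel (X * C) J = X * colsel C J"
proof (rule eq_matI)
  fix i j assume "i < dim_row (X * colsel C J)" "j < dim_col (X * colsel C J)"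
  then have i: "i < k" and j: "j < length J" using X by auto
  have "col (colsel C J) j = col C (J ! j)" using C j J[OF j] by (auto intro!: eq_vecI)
  then show "colsel (X * C) J $$ (i, j) = (X * colsel C J) $$ (i, j)"
    using i j X C J[OF j] by simp
qed (use X C in auto)

lemma cancel_det: fixes M :: "'a::idom mat"
  assumes B: "B \<in> carrier_mat k m" and C: "C \<in> carrier_mat k m" and M: "M \<in> carrier_mat m m"
  and d: "det M \<noteq> 0" and eq: "B * M = C * M"
  shows "B = C"
proof -
  have "B * M * adj_mat M = C * M * adj_mat M" using eq by simp
  then have "B * (M * adj_mat M) = C * (M * adj_mat M)"
    using B C M adj_mat(1)[OF M] by (simp add: assoc_mult_mat[of _ k m _ m _ m])
  then have e: "det M \<cdot>\<^sub>m B = det M \<cdot>\<^sub>m C" using B C M adj_mat(2)[OF M]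
    by (simp add: mult_smult_distrib[OF B one_carrier_mat] mult_smult_distrib[OF C one_carrier_mat])
  show ?thesis
  proof (rule eq_matI)
    fix i j assume "i < dim_row C" "j < dim_col C"
    then have "(det M \<cdot>\<^sub>m B) $$ (i,j) = (det M \<cdot>\<^sub>m C) $$ (i,j)" using e by simp
    then show "B $$ (i,j) = C $$ (i,j)" using \<open>i < dim_row C\<close> \<open>j < dim_col C\<close> B C d by simp
  qed (use B C in auto)
qed



definition sm :: "nat \<Rightarrow> 'a::zero poly \<Rightarrow> bool" where
  "sm e q \<longleftrightarrow> q = 0 \<or> degree q < e"

lemma sm_0[simp]: "sm e 0" by (simp add: sm_def)

lemma sm_add: "sm e a \<Longrightarrow> sm e b \<Longrightarrow> sm e (a + b)"
  unfolding sm_def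
  by (metis add.right_neutral add_0 degree_add_le_max le_less_trans max_less_iff_conj)

lemma sm_sum: "finite S \<Longrightarrow> (\<And>x. x \<in> S \<Longrightarrow> sm e (f x)) \<Longrightarrow> sm e (sum f S)"
  by (induction S rule: finite_induct) (auto intro: sm_add)

lemma add_sm: fixes p :: "'a::comm_ring_1 poly"
  assumes "p \<noteq> 0" "degree p = e" "sm e q" shows "p + q \<noteq> 0 \<and> degree (p + q) = e"
proof (cases "q = 0")
  case False
  with assms have lt: "degree q < degree p" by (simp add: sm_def)
  then have d: "degree (p + q) = e" using assms degree_add_eq_left by metis
  have "p + q \<noteq> 0"
  proof
    assume "p + q = 0" then have "q = - p" by (simp add: eq_neg_iff_add_eq_0 add.commute)
    then show False using lt by simp
  qed
  then show ?thesis using d by simp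
qed (use assms in simp)

lemma sign_mult_degree: fixes x :: "'a::idom poly"
  shows "degree (of_int (sign p) * x) = degree x" "(of_int (sign p) * x = 0) = (x = 0)"
  by (auto simp: sign_def)

lemma degree_det_bound: fixes M :: "'a::idom poly mat"
  assumes M: "M \<in> carrier_mat n n"
  and f: "\<And>i j. i < n \<Longrightarrow> j < n \<Longrightarrow> degree (M $$ (i,j)) \<le> f i j"
  and N: "\<And>p. p permutes {0..<n} \<Longrightarrow> (\<Sum>i = 0..<n. f i (p i)) \<le> N"
  shows "degree (det M) \<le> N"
  unfolding det_def'[OF M]
proof (rule degree_sum_le)
  show "finite {p. p permutes {0..<n}}" by (simp add: finite_permutations)
  fix p assume "p \<in> {p. p permutes {0..<n}}"
  then have p: "p permutes {0..<n}" by simp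
  have "degree (signof p * (\<Prod>i = 0..<n. M $$ (i, p i))) = degree (\<Prod>i = 0..<n. M $$ (i, p i))"
    by (rule sign_mult_degree)
  also have "\<dots> \<le> sum (degree \<circ> (\<lambda>i. M $$ (i, p i))) {0..<n}" by (rule degree_prod_sum_le) (rule finite_atLeastLessThan)
  also have "\<dots> = (\<Sum>i = 0..<n. degree (M $$ (i, p i)))" by (simp add: o_def)
  also have "\<dots> \<le> (\<Sum>i = 0..<n. f i (p i))"
    by (rule sum_mono) (use f p permutes_in_image in fastforce)
  also have "\<dots> \<le> N" by (rule N[OF p])
  finally show "degree (signof p * (\<Prod>i = 0..<n. M $$ (i, p i))) \<le> N" .
qed

lemma sum_permute: "p permutes S \<Longrightarrow> (\<Sum>i\<in>S. g (p i)) = (\<Sum>i\<in>S. g i)"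
  by (rule sum.reindex_bij_betw[OF permutes_imp_bij])

lemma det_popov_like: fixes Q :: "'a::idom poly mat"
  assumes Q: "Q \<in> carrier_mat n n"
  and diag: "\<And>k. k < n \<Longrightarrow> Q $$ (k,k) \<noteq> 0 \<and> degree (Q $$ (k,k)) = d k"
  and off: "\<And>i k. i < n \<Longrightarrow> k < n \<Longrightarrow> i \<noteq> k \<Longrightarrow> sm (d k) (Q $$ (i,k))"
  shows "det Q \<noteq> 0 \<and> degree (det Q) = (\<Sum>k = 0..<n. d k)"
proof -
  let ?P = "{p. p permutes {0..<n}}"
  let ?t = "\<lambda>p. signof p * (\<Prod>i = 0..<n. Q $$ (i, p i)) :: 'a poly"
  have fin: "finite ?P" by (simp add: finite_permutations)
  have idP: "id \<in> ?P" by (simp add: permutes_id)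
  have "det Q = ?t id + sum ?t (?P - {id})"
    unfolding det_def'[OF Q] by (rule sum.remove[OF fin idP])
  moreover have tid: "?t id = (\<Prod>i = 0..<n. Q $$ (i, i))" by simp
  moreover have "(\<Prod>i = 0..<n. Q $$ (i, i)) \<noteq> 0" using diag by auto
  moreover have "degree (\<Prod>i = 0..<n. Q $$ (i, i)) = (\<Sum>k = 0..<n. d k)"
    by (subst degree_prod_eq_sum_degree) (use diag in auto)
  moreover have "sm (\<Sum>k = 0..<n. d k) (sum ?t (?P - {id}))"
  proof (rule sm_sum)
    show "finite (?P - {id})" using fin by simp
    fix p assume "p \<in> ?P - {id}"
    then have p: "p permutes {0..<n}" and pid: "p \<noteq> id" by auto
    show "sm (\<Sum>k = 0..<n. d k) (?t p)"
    proof (cases "\<exists>i<n. Q $$ (i, p i) = 0")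
      case True
      have z: "(\<Prod>i = 0..<n. Q $$ (i, p i)) = 0"
        by (rule prod_zero) (use True in auto)
      have e: "?t p = 0" by (simp only: z mult_zero_right)
      show ?thesis by (subst e) (rule sm_0)
    next
      case False
      then have nz: "\<forall>i\<in>{0..<n}. Q $$ (i, p i) \<noteq> 0" by auto
      obtain i0 where i0: "p i0 \<noteq> i0" using pid by (meson eq_id_iff)
      then have i0n: "i0 < n" using p by (meson atLeastLessThan_iff permutes_not_in zero_le not_le)
      have pin: "\<And>i. i < n \<Longrightarrow> p i < n" using p by (meson atLeastLessThan_iff permutes_in_image zero_le)
      have le: "degree (Q $$ (i, p i)) \<le> d (p i)" if "i \<in> {0..<n}" for i
        using that diag[of i] off[of i "p i"] nz pin[of i] by (cases "p i = i") (auto simp: sm_def)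
      have lt: "degree (Q $$ (i0, p i0)) < d (p i0)"
        using off[of i0 "p i0"] nz i0 i0n pin[OF i0n] by (auto simp: sm_def)
      have "degree (?t p) = degree (\<Prod>i = 0..<n. Q $$ (i, p i))" by (rule sign_mult_degree)
      also have "\<dots> = (\<Sum>i = 0..<n. degree (Q $$ (i, p i)))"
        by (rule degree_prod_eq_sum_degree[OF nz])
      also have "\<dots> < (\<Sum>i = 0..<n. d (p i))"
        by (rule sum_strict_mono_ex1) (use le lt i0n in auto)
      also have "\<dots> = (\<Sum>k = 0..<n. d k)" by (rule sum_permute[OF p])
      finally show ?thesis by (simp add: sm_def)
    qed
  qed
  ultimately show ?thesis using add_sm[of "\<Prod>i = 0..<n. Q $$ (i, i)" "\<Sum>k = 0..<n. d k" "sum ?t (?P - {id})"] by simp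
qed



lemma pred_deg:
  fixes P :: "'a::idom poly mat" and u :: "nat \<Rightarrow> 'a poly" and s :: "nat \<Rightarrow> int"
  assumes pivn: "\<And>k. k < m \<Longrightarrow> piv k < n"
  and pivnz: "\<And>k. k < m \<Longrightarrow> P $$ (k, piv k) \<noteq> 0"
  and le: "\<And>k j. k < m \<Longrightarrow> j < n \<Longrightarrow> P $$ (k,j) \<noteq> 0 \<Longrightarrow>
      int (degree (P $$ (k,j))) + s j \<le> int (degree (P $$ (k, piv k))) + s (piv k)"
  and lt: "\<And>k j. k < m \<Longrightarrow> j < n \<Longrightarrow> piv k < j \<Longrightarrow> P $$ (k,j) \<noteq> 0 \<Longrightarrow>
      int (degree (P $$ (k,j))) + s j < int (degree (P $$ (k, piv k))) + s (piv k)"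
  and mono: "\<And>k k'. k < k' \<Longrightarrow> k' < m \<Longrightarrow> piv k < piv k'"
  and k0: "k0 < m" "u k0 \<noteq> 0"
  shows "\<exists>j<n. (\<Sum>k<m. u k * P $$ (k,j)) \<noteq> 0 \<and>
     int (degree (u k0)) + (int (degree (P $$ (k0, piv k0))) + s (piv k0))
       \<le> int (degree (\<Sum>k<m. u k * P $$ (k,j))) + s j"
proof -
  define t where "t k = int (degree (P $$ (k, piv k))) + s (piv k)" for k
  define g where "g k = int (degree (u k)) + t k" for k
  define K where "K = {k. k < m \<and> u k \<noteq> 0}"
  have finK: "finite K" and k0K: "k0 \<in> K" using k0 by (auto simp: K_def)
  define M where "M = Max (g ` K)"
  have gM: "\<And>k. k \<in> K \<Longrightarrow> g k \<le> M" unfolding M_def using finK by auto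
  have "M \<in> g ` K" unfolding M_def using finK k0K by (intro Max_in) auto
  define K' where "K' = {k \<in> K. g k = M}"
  have finK': "finite K'" using finK by (simp add: K'_def)
  have K'ne: "K' \<noteq> {}" using \<open>M \<in> g ` K\<close> by (auto simp: K'_def)
  define ks where "ks = Max K'"
  have ksK': "ks \<in> K'" unfolding ks_def using finK' K'ne by (rule Max_in)
  have ksmax: "\<And>k. k \<in> K' \<Longrightarrow> k \<le> ks" unfolding ks_def using finK' by simp
  have ks: "ks < m" "u ks \<noteq> 0" "g ks = M" using ksK' by (auto simp: K'_def K_def)
  define j where "j = piv ks"
  have jn: "j < n" using pivn[OF ks(1)] by (simp add: j_def)
  define e where "e = degree (u ks) + degree (P $$ (ks, j))"
  have first: "u ks * P $$ (ks, j) \<noteq> 0" "degree (u ks * P $$ (ks, j)) = e"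
    using ks pivnz[OF ks(1)] by (auto simp: j_def e_def degree_mult_eq)
  have eM: "int e + s j = M" using ks(3) by (simp add: e_def g_def t_def j_def)
  have rest: "sm e (\<Sum>k\<in>{..<m} - {ks}. u k * P $$ (k,j))"
  proof (rule sm_sum)
    fix k assume k: "k \<in> {..<m} - {ks}"
    show "sm e (u k * P $$ (k, j))"
    proof (cases "u k = 0 \<or> P $$ (k,j) = 0")
      case True then show ?thesis by auto
    next
      case False
      then have kK: "k \<in> K" using k by (auto simp: K_def)
      have "int (degree (u k)) + int (degree (P $$ (k,j))) + s j < M"
      proof (cases "k \<in> K'")
        case True
        then have "k < ks" using ksmax[OF True] k by auto
        then have "piv k < j" using mono ks(1) by (simp add: j_def)
        then have "int (degree (P $$ (k,j))) + s j < t k" using lt[of k j] k jn False by (auto simp: t_def)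
        moreover have "g k = M" using True by (simp add: K'_def)
        ultimately show ?thesis by (simp add: g_def)
      next
        case nK': False
        then have "g k < M" using gM[OF kK] kK by (auto simp: K'_def)
        moreover have "int (degree (P $$ (k,j))) + s j \<le> t k" using le[of k j] k jn False by (auto simp: t_def)
        ultimately show ?thesis by (simp add: g_def)
      qed
      then have "degree (u k * P $$ (k,j)) < e" using False eM by (simp add: degree_mult_eq)
      then show ?thesis by (simp add: sm_def)
    qed
  qed simp
  have split: "(\<Sum>k<m. u k * P $$ (k,j)) = u ks * P $$ (ks, j) + (\<Sum>k\<in>{..<m} - {ks}. u k * P $$ (k,j))"
    by (rule sum.remove) (use ks in auto)
  have w: "(\<Sum>k<m. u k * P $$ (k,j)) \<noteq> 0 \<and> degree (\<Sum>k<m. u k * P $$ (k,j)) = e"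
    unfolding split by (rule add_sm[OF first rest])
  have "g k0 \<le> M" by (rule gM[OF k0K])
  then show ?thesis using w eM jn by (intro exI[of _ j]) (auto simp: g_def t_def)
qed



lemma adj_row_det: fixes M :: "'a::comm_ring_1 mat"
  assumes M: "M \<in> carrier_mat m m" and i: "i < m"
  shows "(\<Sum>k<m. v k * adj_mat M $$ (k,i)) = det (mat m m (\<lambda>(l,k). if l = i then v k else M $$ (l,k)))"
proof -
  define B where "B = mat m m (\<lambda>(l,k). if l = i then v k else M $$ (l,k))"
  have B: "B \<in> carrier_mat m m" by (simp add: B_def)
  have cof: "cofactor B i k = cofactor M i k" for k
  proof -
    have "mat_delete B i k = mat_delete M i k"
      by (rule eq_matI) (use M in \<open>auto simp: mat_delete_def B_def\<close>)
    then show ?thesis by (simp add: cofactor_def)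
  qed
  have "det B = (\<Sum>k<m. B $$ (i,k) * cofactor B i k)" by (rule laplace_expansion_row[OF B i])
  also have "\<dots> = (\<Sum>k<m. v k * adj_mat M $$ (k,i))"
  proof (rule sum.cong)
    fix k assume "k \<in> {..<m}"
    then have "B $$ (i,k) = v k" "adj_mat M $$ (k,i) = cofactor M i k" using M i by (auto simp: B_def adj_mat_def)
    then show "B $$ (i,k) * cofactor B i k = v k * adj_mat M $$ (k,i)" by (simp add: cof)
  qed simp
  finally show ?thesis by (simp add: B_def)
qed

lemma adj_col_det: fixes M :: "'a::comm_ring_1 mat"
  assumes M: "M \<in> carrier_mat m m" and k: "k < m"
  shows "(\<Sum>i<m. adj_mat M $$ (k,i) * w i) = det (mat m m (\<lambda>(l,q). if q = k then w l else M $$ (l,q)))"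
proof -
  define C where "C = mat m m (\<lambda>(l,q). if q = k then w l else M $$ (l,q))"
  have C: "C \<in> carrier_mat m m" by (simp add: C_def)
  have cof: "cofactor C i k = cofactor M i k" for i
  proof -
    have "mat_delete C i k = mat_delete M i k"
      by (rule eq_matI) (use M in \<open>auto simp: mat_delete_def C_def\<close>)
    then show ?thesis by (simp add: cofactor_def)
  qed
  have "det C = (\<Sum>i<m. C $$ (i,k) * cofactor C i k)" by (rule laplace_expansion_column[OF C k])
  also have "\<dots> = (\<Sum>i<m. adj_mat M $$ (k,i) * w i)"
  proof (rule sum.cong)
    fix i assume "i \<in> {..<m}"
    then have "C $$ (i,k) = w i" "adj_mat M $$ (k,i) = cofactor M i k" using M k by (auto simp: C_def adj_mat_def)
    then show "C $$ (i,k) * cofactor C i k = adj_mat M $$ (k,i) * w i" by (simp add: cof mult.commute)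
  qed simp
  finally show ?thesis by (simp add: C_def)
qed



lemma sum_rdeg_eq: fixes A :: "'a::zero poly mat"
  assumes A: "A \<in> carrier_mat m n" and nz: "\<And>l. l < m \<Longrightarrow> row A l \<noteq> 0\<^sub>v n"
  shows "sum_rdeg A = ereal (real (\<Sum>l<m. vdn (row A l)))"
proof -
  have "sum_rdeg A = (\<Sum>l<m. ereal (real (vdn (row A l))))"
    unfolding sum_rdeg_def
  proof (rule sum.cong)
    fix l assume "l \<in> {..<m}"
    then have l: "l < m" by simp
    show "vdeg (row A l) = ereal (real (vdn (row A l)))" by (rule vdeg_eq) (use nz[OF l] A in simp)
  qed (use A in simp)
  also have "\<dots> = ereal (real (\<Sum>l<m. vdn (row A l)))" by (simp add: sum_ereal)
  finally show ?thesis .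
qed

lemma sum_cdeg_eq: fixes M :: "'a::zero poly mat"
  assumes M: "M \<in> carrier_mat m k" and nz: "\<And>q. q < k \<Longrightarrow> col M q \<noteq> 0\<^sub>v m"
  shows "sum_cdeg M = ereal (real (\<Sum>q<k. vdn (col M q)))"
proof -
  have "sum_cdeg M = (\<Sum>q<k. ereal (real (vdn (col M q))))"
    unfolding sum_cdeg_def
  proof (rule sum.cong)
    fix q assume "q \<in> {..<k}"
    then have q: "q < k" by simp
    show "vdeg (col M q) = ereal (real (vdn (col M q)))" by (rule vdeg_eq) (use nz[OF q] M in simp)
  qed (use M in simp)
  also have "\<dots> = ereal (real (\<Sum>q<k. vdn (col M q)))" by (simp add: sum_ereal)
  finally show ?thesis .
qed

lemma sum_cdeg_nonzero_cols: fixes A :: "'a::zero poly mat"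
  assumes A: "A \<in> carrier_mat m n"
  shows "sum_cdeg (nonzero_cols A) = ereal (real (\<Sum>c\<in>{c. c < n \<and> col A c \<noteq> 0\<^sub>v m}. vdn (col A c)))"
proof -
  define F where "F = filter (\<lambda>j. col A j \<noteq> 0\<^sub>v m) [0..<n]"
  have NA: "nonzero_cols A = colsel A F" using A by (simp add: nonzero_cols_def F_def)
  have dist: "distinct F" by (simp add: F_def)
  have setF: "set F = {c. c < n \<and> col A c \<noteq> 0\<^sub>v m}" by (auto simp: F_def)
  have Fin: "\<And>q. q < length F \<Longrightarrow> F ! q < n \<and> col A (F ! q) \<noteq> 0\<^sub>v m"
    using setF nth_mem by blast
  have C: "colsel A F \<in> carrier_mat m (length F)" by (rule carrier_matI) (use A in simp_all)
  have colF: "\<And>q. q < length F \<Longrightarrow> col (colsel A F) q = col A (F ! q)"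
    using A Fin by (auto intro!: eq_vecI)
  have "sum_cdeg (colsel A F) = ereal (real (\<Sum>q<length F. vdn (col (colsel A F) q)))"
    by (rule sum_cdeg_eq[OF C]) (simp add: colF Fin)
  also have "(\<Sum>q<length F. vdn (col (colsel A F) q)) = (\<Sum>q<length F. vdn (col A (F ! q)))"
    by (rule sum.cong) (simp_all add: colF)
  also have "\<dots> = (\<Sum>c\<in>set F. vdn (col A c))"
  proof -
    have inj: "inj_on ((!) F) {..<length F}" by (rule inj_on_nth[OF dist]) auto
    have im: "(!) F ` {..<length F} = set F" using nth_image[of "length F" F] by (simp add: atLeast0LessThan)
    show ?thesis using sum.reindex[OF inj, of "\<lambda>c. vdn (col A c)"] im by (simp add: o_def)
  qed
  finally show ?thesis using NA setF by simp
qed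

lemma sum_rdeg_le_m: fixes A :: "'a::zero poly mat"
  assumes A: "A \<in> carrier_mat m n" and nz: "\<And>l. l < m \<Longrightarrow> row A l \<noteq> 0\<^sub>v n"
  shows "sum_rdeg A \<le> ereal (real m) * mdeg A"
proof (cases "m = 0")
  case True
  then show ?thesis using A by (simp add: sum_rdeg_def zero_ereal_def[symmetric])
next
  case False
  define a where "a = Max ((\<lambda>l. vdn (row A l)) ` {..<m})"
  have "a \<in> (\<lambda>l. vdn (row A l)) ` {..<m}" unfolding a_def using False by (intro Max_in) auto
  then obtain l0 where l0: "l0 < m" "a = vdn (row A l0)" by auto
  have "ereal (real a) = vdeg (row A l0)" using vdeg_eq[of "row A l0"] nz[OF l0(1)] A l0 by simp
  also have "\<dots> \<le> mdeg A" using A l0 by (intro vdeg_row_le_mdeg) simp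
  finally have am: "ereal (real a) \<le> mdeg A" .
  have "(\<Sum>l<m. vdn (row A l)) \<le> (\<Sum>l<m. a)" by (rule sum_mono) (auto simp: a_def)
  then have "(\<Sum>l<m. vdn (row A l)) \<le> m * a" by simp
  then have h: "real (\<Sum>l<m. vdn (row A l)) \<le> real m * real a" by (metis of_nat_le_iff of_nat_mult)
  have "sum_rdeg A \<le> ereal (real m) * ereal (real a)"
    using sum_rdeg_eq[OF A nz] h by (simp del: of_nat_sum)
  also have "\<dots> \<le> ereal (real m) * mdeg A" by (rule ereal_mult_left_mono[OF am]) simp
  finally show ?thesis .
qed



theorem lemma5p1:
  fixes A P :: "'a::field poly mat" and s :: "nat \<Rightarrow> int" and m n :: nat
  assumes A: "A \<in> carrier_mat m n" and mn: "m \<le> n" and rk: "full_row_rank A"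
    and P: "is_popov_form_of s P A"
  defines "\<pi> \<equiv> pivots s P"
  shows "det (colsel A \<pi>) \<noteq> 0 \<and>
         is_popov_form_of (subshift s \<pi>) (colsel P \<pi>) (colsel A \<pi>) \<and>
         (\<exists>U. U \<in> carrier_mat m m \<and> U * colsel A \<pi> = colsel P \<pi> \<and>
              unimodular U \<and> U * A = P \<and>
              (\<forall>V. V \<in> carrier_mat m m \<and> unimodular V \<and> V * A = P \<longrightarrow> V = U) \<and>
              (\<forall>i < m. vdeg (col U i) \<le> sum_rdeg A - vdeg (row A i)) \<and>
              mdeg U \<le> sum_cdeg (colsel A \<pi>)) \<and>
         mdeg P \<le> mdeg A + ereal (real_of_int (amp n s)) \<and>
         mdeg P \<le> min (sum_rdeg A) (sum_cdeg (nonzero_cols A)) \<and>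
         min (sum_rdeg A) (sum_cdeg (nonzero_cols A)) \<le> ereal (real m) * mdeg A"
proof -
  have Pc: "P \<in> carrier_mat m n" and pop: "is_popov s P" and rm: "rowmod P = rowmod A"
    using P A unfolding is_popov_form_of_def by auto
  define piv where "piv k = spiv s (row P k)" for k
  have \<pi>: "\<pi> = map piv [0..<m]" using Pc by (simp add: \<pi>_def pivots_def piv_def)
  have len: "length \<pi> = m" by (simp add: \<pi>)
  have nth: "\<And>k. k < m \<Longrightarrow> \<pi> ! k = piv k" by (simp add: \<pi>)
  have rownz: "\<And>k. k < m \<Longrightarrow> row P k \<noteq> 0\<^sub>v (dim_vec (row P k))"
    using pop Pc unfolding is_popov_def by auto
  have dimr: "\<And>k. dim_vec (row P k) = n" using Pc by simp
  have pivn: "\<And>k. k < m \<Longrightarrow> piv k < n"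
    using spiv_props(1)[OF rownz] dimr by (simp add: piv_def)
  have pivnz: "\<And>k. k < m \<Longrightarrow> P $$ (k, piv k) \<noteq> 0"
  proof -
    fix k assume k: "k < m"
    have "row P k $ piv k \<noteq> 0" using spiv_props(2)[OF rownz[OF k], of s] by (simp add: piv_def)
    then show "P $$ (k, piv k) \<noteq> 0" using pivn[OF k] k Pc by simp
  qed
  have le: "\<And>k j. k < m \<Longrightarrow> j < n \<Longrightarrow> P $$ (k,j) \<noteq> 0 \<Longrightarrow>
      int (degree (P $$ (k,j))) + s j \<le> int (degree (P $$ (k, piv k))) + s (piv k)"
  proof -
    fix k j assume kj: "k < m" "j < n" "P $$ (k,j) \<noteq> 0"
    show "int (degree (P $$ (k,j))) + s j \<le> int (degree (P $$ (k, piv k))) + s (piv k)"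
      using spiv_props(3)[OF rownz[OF kj(1)], of j s] kj pivn[OF kj(1)] Pc by (simp add: piv_def)
  qed
  have lt: "\<And>k j. k < m \<Longrightarrow> j < n \<Longrightarrow> piv k < j \<Longrightarrow> P $$ (k,j) \<noteq> 0 \<Longrightarrow>
      int (degree (P $$ (k,j))) + s j < int (degree (P $$ (k, piv k))) + s (piv k)"
  proof -
    fix k j assume kj: "k < m" "j < n" "piv k < j" "P $$ (k,j) \<noteq> 0"
    show "int (degree (P $$ (k,j))) + s j < int (degree (P $$ (k, piv k))) + s (piv k)"
      using spiv_props(4)[OF rownz[OF kj(1)], of j s] kj pivn[OF kj(1)] Pc by (simp add: piv_def)
  qed
  have mono: "\<And>k k'. k < k' \<Longrightarrow> k' < m \<Longrightarrow> piv k < piv k'"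
    using pop Pc unfolding is_popov_def piv_def by auto
  have lc: "\<And>k. k < m \<Longrightarrow> lead_coeff (P $$ (k, piv k)) = 1"
    using pop Pc unfolding is_popov_def piv_def by auto
  define d where "d k = degree (P $$ (k, piv k))" for k
  have colpd: "\<And>i k. i < m \<Longrightarrow> k < m \<Longrightarrow> i \<noteq> k \<Longrightarrow> pdeg (P $$ (i, piv k)) < pdeg (P $$ (k, piv k))"
    using pop Pc unfolding is_popov_def piv_def by auto
  have colc: "\<And>i k. i < m \<Longrightarrow> k < m \<Longrightarrow> i \<noteq> k \<Longrightarrow> sm (d k) (P $$ (i, piv k))"
  proof -
    fix i k assume ik: "i < m" "k < m" "i \<noteq> k"
    have "pdeg (P $$ (i, piv k)) < pdeg (P $$ (k, piv k))"
      using colpd[OF ik] .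
    then show "sm (d k) (P $$ (i, piv k))"
      using pivnz[OF ik(2)] by (cases "P $$ (i, piv k) = 0") (auto simp: sm_def d_def pdeg_nz)
  qed
  have colle: "\<And>i k. i < m \<Longrightarrow> k < m \<Longrightarrow> degree (P $$ (i, piv k)) \<le> d k"
    using colc by (metis d_def less_imp_le_nat order_refl sm_def degree_0 zero_le)
  obtain X where X: "X \<in> carrier_mat m m" and PXA: "P = X * A"
    using rowmod_factor[OF Pc A] rm by auto
  obtain Y where Y: "Y \<in> carrier_mat m m" and AYP: "A = Y * P"
    using rowmod_factor[OF A Pc] rm by auto
  have Jn: "\<And>l. l < length \<pi> \<Longrightarrow> \<pi> ! l < n" using len nth pivn by auto
  define A\<pi> where "A\<pi> = colsel A \<pi>"
  define P\<pi> where "P\<pi> = colsel P \<pi>"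
  have A\<pi>c: "A\<pi> \<in> carrier_mat m m" unfolding A\<pi>_def by (rule carrier_matI) (use A len in auto)
  have P\<pi>c: "P\<pi> \<in> carrier_mat m m" unfolding P\<pi>_def by (rule carrier_matI) (use Pc len in auto)
  have A\<pi>e: "\<And>i k. i < m \<Longrightarrow> k < m \<Longrightarrow> A\<pi> $$ (i,k) = A $$ (i, piv k)"
    using A len nth by (simp add: A\<pi>_def)
  have P\<pi>e: "\<And>i k. i < m \<Longrightarrow> k < m \<Longrightarrow> P\<pi> $$ (i,k) = P $$ (i, piv k)"
    using Pc len nth by (simp add: P\<pi>_def)
  have PXA\<pi>: "P\<pi> = X * A\<pi>" unfolding P\<pi>_def A\<pi>_def PXA by (rule colsel_mult[OF X A Jn])
  have AYP\<pi>: "A\<pi> = Y * P\<pi>" unfolding P\<pi>_def A\<pi>_def AYP by (rule colsel_mult[OF Y Pc Jn])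
  define \<delta> where "\<delta> = (\<Sum>k = 0..<m. d k)"
  have detP: "det P\<pi> \<noteq> 0 \<and> degree (det P\<pi>) = \<delta>"
    unfolding \<delta>_def
  proof (rule det_popov_like[OF P\<pi>c])
    fix k assume "k < m" then show "P\<pi> $$ (k,k) \<noteq> 0 \<and> degree (P\<pi> $$ (k,k)) = d k"
      using pivnz P\<pi>e by (simp add: d_def)
  next
    fix i k assume "i < m" "k < m" "i \<noteq> k" then show "sm (d k) (P\<pi> $$ (i,k))"
      using colc P\<pi>e by simp
  qed
  have dmul: "det P\<pi> = det X * det A\<pi>" unfolding PXA\<pi> by (rule det_mult[OF X A\<pi>c])
  have detA: "det A\<pi> \<noteq> 0" using detP dmul by auto
  have XY: "X * Y = 1\<^sub>m m"
  proof (rule cancel_det[OF _ _ P\<pi>c detP[THEN conjunct1]])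
    show "X * Y \<in> carrier_mat m m" using X Y by simp
    show "1\<^sub>m m \<in> carrier_mat m m" by simp
    have "X * Y * P\<pi> = X * (Y * P\<pi>)" using X Y P\<pi>c by (simp add: assoc_mult_mat[of _ m m _ m _ m])
    also have "\<dots> = P\<pi>" using AYP\<pi> PXA\<pi> by simp
    finally show "X * Y * P\<pi> = 1\<^sub>m m * P\<pi>" using P\<pi>c by simp
  qed
  have YX: "Y * X = 1\<^sub>m m"
  proof (rule cancel_det[OF _ _ A\<pi>c detA])
    show "Y * X \<in> carrier_mat m m" using X Y by simp
    show "1\<^sub>m m \<in> carrier_mat m m" by simp
    have "Y * X * A\<pi> = Y * (X * A\<pi>)" using X Y A\<pi>c by (simp add: assoc_mult_mat[of _ m m _ m _ m])
    also have "\<dots> = A\<pi>" using AYP\<pi> PXA\<pi> by simp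
    finally show "Y * X * A\<pi> = 1\<^sub>m m * A\<pi>" using A\<pi>c by simp
  qed
  have dXY: "det X * det Y = 1" using det_mult[OF X Y] XY by simp
  then have "det X \<noteq> 0" "det Y \<noteq> 0" by auto
  then have degX: "degree (det X) = 0" using dXY
    by (metis add_is_0 degree_1 degree_mult_eq)
  have degA: "degree (det A\<pi>) = \<delta>"
    using detP dmul degX detA \<open>det X \<noteq> 0\<close> by (simp add: degree_mult_eq)
  have dle: "\<And>k. k < m \<Longrightarrow> d k \<le> \<delta>" unfolding \<delta>_def by (rule member_le_sum) auto
  define U where "U = X"
  have Uc: "U \<in> carrier_mat m m" using X by (simp add: U_def)
  have UA: "U * A = P" using PXA by (simp add: U_def)
  have UA\<pi>: "U * A\<pi> = P\<pi>" using PXA\<pi> by (simp add: U_def)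
  have unimod: "unimodular U" unfolding unimodular_def U_def
    using X Y XY YX by (intro bexI[of _ Y]) auto
  have uniq: "\<forall>V. V \<in> carrier_mat m m \<and> unimodular V \<and> V * A = P \<longrightarrow> V = U"
  proof (intro allI impI, elim conjE)
    fix V assume V: "V \<in> carrier_mat m m" "unimodular V" "V * A = P"
    have "V * A\<pi> = P\<pi>" unfolding A\<pi>_def P\<pi>_def using colsel_mult[OF V(1) A Jn] V(3) by simp
    then show "V = U" using cancel_det[OF V(1) Uc A\<pi>c detA] UA\<pi> by simp
  qed
  have ss: "\<And>l. l < m \<Longrightarrow> subshift s \<pi> l = s (piv l)" using nth by (simp add: subshift_def)
  have r: "\<And>k l. k < m \<Longrightarrow> l < m \<Longrightarrow> row P\<pi> k $ l = P $$ (k, piv l)" using P\<pi>c P\<pi>e by simp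
  have dimP\<pi>: "\<And>k. dim_vec (row P\<pi> k) = m" using P\<pi>c by simp
  have sp: "\<And>k. k < m \<Longrightarrow> spiv (subshift s \<pi>) (row P\<pi> k) = k"
  proof -
    fix k assume k: "k < m"
    show "spiv (subshift s \<pi>) (row P\<pi> k) = k"
    proof (rule spiv_eqI)
      show "k < dim_vec (row P\<pi> k)" using k dimP\<pi> by simp
      show "row P\<pi> k $ k \<noteq> 0" using r[OF k k] pivnz[OF k] by simp
    next
      fix l assume l: "l < dim_vec (row P\<pi> k)" "row P\<pi> k $ l \<noteq> 0"
      then have l': "l < m" using dimP\<pi> by simp
      show "ideg (subshift s \<pi>) (row P\<pi> k) l \<le> ideg (subshift s \<pi>) (row P\<pi> k) k"
        using le[OF k pivn[OF l']] l(2) r[OF k l'] r[OF k k] ss[OF l'] ss[OF k] by simp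
    next
      fix l assume l: "l < dim_vec (row P\<pi> k)" "k < l" "row P\<pi> k $ l \<noteq> 0"
      then have l': "l < m" using dimP\<pi> by simp
      have "piv k < piv l" using mono[OF l(2) l'] .
      then show "ideg (subshift s \<pi>) (row P\<pi> k) l < ideg (subshift s \<pi>) (row P\<pi> k) k"
        using lt[OF k pivn[OF l']] l(3) r[OF k l'] r[OF k k] ss[OF l'] ss[OF k] by simp
    qed
  qed
  have popform: "is_popov_form_of (subshift s \<pi>) P\<pi> A\<pi>"
    unfolding is_popov_form_of_def
  proof (intro conjI)
    show "P\<pi> \<in> carrier_mat (dim_row A\<pi>) (dim_col A\<pi>)" using P\<pi>c A\<pi>c by simp
    have s1: "rowmod P\<pi> \<subseteq> rowmod A\<pi>" using rowmod_mult[OF X A\<pi>c] PXA\<pi> by simp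
    have s2: "rowmod A\<pi> \<subseteq> rowmod P\<pi>" using rowmod_mult[OF Y P\<pi>c] AYP\<pi> by simp
    show "rowmod P\<pi> = rowmod A\<pi>" using s1 s2 by (rule equalityI)
    show "is_popov (subshift s \<pi>) P\<pi>"
      unfolding is_popov_def
    proof (intro conjI allI impI)
      fix k assume k: "k < dim_row P\<pi>"
      then have k': "k < m" using P\<pi>c by simp
      show "row P\<pi> k \<noteq> 0\<^sub>v (dim_col P\<pi>)"
      proof
        assume "row P\<pi> k = 0\<^sub>v (dim_col P\<pi>)"
        then have "row P\<pi> k $ k = 0" using k' P\<pi>c by simp
        then show False using r[OF k' k'] pivnz[OF k'] by simp
      qed
      show "lead_coeff (P\<pi> $$ (k, spiv (subshift s \<pi>) (row P\<pi> k))) = 1"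
        using sp[OF k'] P\<pi>e[OF k' k'] lc[OF k'] by simp
    next
      fix i i' assume h: "i < i' \<and> i' < dim_row P\<pi>"
      then have "i < m" "i' < m" using P\<pi>c by auto
      then show "spiv (subshift s \<pi>) (row P\<pi> i) < spiv (subshift s \<pi>) (row P\<pi> i')"
        using sp h by simp
    next
      fix k i' assume k: "k < dim_row P\<pi>" and i': "i' < dim_row P\<pi>" "i' \<noteq> k"
      then have k': "k < m" and i'': "i' < m" using P\<pi>c by auto
      have "pdeg (P $$ (i', piv k)) < pdeg (P $$ (k, piv k))"
        using colpd[OF i'' k' i'(2)] .
      then show "pdeg (P\<pi> $$ (i', spiv (subshift s \<pi>) (row P\<pi> k))) < pdeg (P\<pi> $$ (k, spiv (subshift s \<pi>) (row P\<pi> k)))"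
        using sp[OF k'] P\<pi>e[OF i'' k'] P\<pi>e[OF k' k'] by simp
    qed
  qed
  have colY: "\<And>k. k < m \<Longrightarrow> \<exists>i<m. Y $$ (i,k) \<noteq> 0"
  proof (rule ccontr)
    fix k assume k: "k < m" and no: "\<not> (\<exists>i<m. Y $$ (i,k) \<noteq> 0)"
    have "(X * Y) $$ (k,k) = (\<Sum>i = 0..<m. X $$ (k,i) * Y $$ (i,k))"
      using X Y k by (simp add: scalar_prod_def)
    also have "\<dots> = 0" using no by simp
    finally show False using XY k by simp
  qed
  have Ae: "\<And>i j. i < m \<Longrightarrow> j < n \<Longrightarrow> A $$ (i,j) = (\<Sum>k<m. Y $$ (i,k) * P $$ (k,j))"
    using Y Pc by (simp add: AYP scalar_prod_def atLeast0LessThan)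
  have tb: "\<And>k. k < m \<Longrightarrow> \<exists>i j. i < m \<and> j < n \<and> A $$ (i,j) \<noteq> 0 \<and>
       int (degree (P $$ (k, piv k))) + s (piv k) \<le> int (degree (A $$ (i,j))) + s j"
  proof -
    fix k assume k: "k < m"
    obtain i where i: "i < m" "Y $$ (i,k) \<noteq> 0" using colY[OF k] by auto
    obtain j where j: "j < n" "(\<Sum>k<m. Y $$ (i,k) * P $$ (k,j)) \<noteq> 0"
      "int (degree (Y $$ (i,k))) + (int (degree (P $$ (k, piv k))) + s (piv k))
       \<le> int (degree (\<Sum>k<m. Y $$ (i,k) * P $$ (k,j))) + s j"
      using pred_deg[of m piv n P s k "\<lambda>k. Y $$ (i,k)", OF pivn pivnz le lt mono k i(2)] by blast
    show "\<exists>i j. i < m \<and> j < n \<and> A $$ (i,j) \<noteq> 0 \<and>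
       int (degree (P $$ (k, piv k))) + s (piv k) \<le> int (degree (A $$ (i,j))) + s j"
      using i j Ae[OF i(1) j(1)] by (intro exI[of _ i] exI[of _ j]) auto
  qed
  have ampb: "\<And>j j'. j < n \<Longrightarrow> j' < n \<Longrightarrow> s j - s j' \<le> amp n s"
  proof -
    fix j j' assume "j < n" "j' < n"
    then have "s j \<le> Max (s ` {..<n})" "Min (s ` {..<n}) \<le> s j'" by auto
    then show "s j - s j' \<le> amp n s" by (simp add: amp_def)
  qed
  have partI: "mdeg P \<le> mdeg A + ereal (real_of_int (amp n s))"
  proof (rule mdeg_least)
    fix k j' assume "k < dim_row P" "j' < dim_col P"
    then have k: "k < m" and j': "j' < n" using Pc by auto
    show "pdeg (P $$ (k,j')) \<le> mdeg A + ereal (real_of_int (amp n s))"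
    proof (cases "P $$ (k,j') = 0")
      case False
      obtain i j where ij: "i < m" "j < n" "A $$ (i,j) \<noteq> 0"
        "int (degree (P $$ (k, piv k))) + s (piv k) \<le> int (degree (A $$ (i,j))) + s j"
        using tb[OF k] by blast
      have "int (degree (P $$ (k,j'))) \<le> int (degree (A $$ (i,j))) + amp n s"
        using le[OF k j' False] ij(4) ampb[OF ij(2) j'] by linarith
      then have "pdeg (P $$ (k,j')) \<le> pdeg (A $$ (i,j)) + ereal (real_of_int (amp n s))"
        using False ij(3) by (simp add: pdeg_nz)
      also have "\<dots> \<le> mdeg A + ereal (real_of_int (amp n s))"
        by (rule add_right_mono, rule mdeg_upper) (use A ij in auto)
      finally show ?thesis .
    qed simp
  qed
  define adj where "adj = adj_mat A\<pi>"
  define D where "D = det A\<pi>"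
  have adjc: "adj \<in> carrier_mat m m" unfolding adj_def by (rule adj_mat(1)[OF A\<pi>c])
  have Aadj: "A\<pi> * adj = D \<cdot>\<^sub>m 1\<^sub>m m" unfolding adj_def D_def by (rule adj_mat(2)[OF A\<pi>c])
  have adjA: "adj * A\<pi> = D \<cdot>\<^sub>m 1\<^sub>m m" unfolding adj_def D_def by (rule adj_mat(3)[OF A\<pi>c])
  have DnZ: "D \<noteq> 0" using detA by (simp add: D_def)
  have degD: "degree D = \<delta>" using degA by (simp add: D_def)
  have PU: "P\<pi> * adj = D \<cdot>\<^sub>m U"
  proof -
    have "P\<pi> * adj = U * A\<pi> * adj" using UA\<pi> by simp
    also have "\<dots> = U * (A\<pi> * adj)" by (rule assoc_mult_mat[OF Uc A\<pi>c adjc])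
    also have "\<dots> = D \<cdot>\<^sub>m U" unfolding Aadj using mult_smult_distrib[OF Uc one_carrier_mat, of D] Uc by simp
    finally show ?thesis .
  qed
  have DU: "\<And>j i. j < m \<Longrightarrow> i < m \<Longrightarrow> D * U $$ (j,i) = (\<Sum>k<m. P\<pi> $$ (j,k) * adj $$ (k,i))"
  proof -
    fix j i assume ji: "j < m" "i < m"
    have "D * U $$ (j,i) = (P\<pi> * adj) $$ (j,i)" using PU Uc ji by simp
    also have "\<dots> = (\<Sum>k<m. P\<pi> $$ (j,k) * adj $$ (k,i))"
      using P\<pi>c adjc ji by (simp add: scalar_prod_def atLeast0LessThan)
    finally show "D * U $$ (j,i) = (\<Sum>k<m. P\<pi> $$ (j,k) * adj $$ (k,i))" .
  qed
  have PA: "D \<cdot>\<^sub>m P = P\<pi> * (adj * A)"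
  proof -
    have "D \<cdot>\<^sub>m P = (D \<cdot>\<^sub>m U) * A" using UA mult_smult_assoc_mat[OF Uc A, of D] by simp
    also have "\<dots> = P\<pi> * adj * A" using PU by simp
    also have "\<dots> = P\<pi> * (adj * A)" by (rule assoc_mult_mat[OF P\<pi>c adjc A])
    finally show ?thesis .
  qed
  have DP: "\<And>j c. j < m \<Longrightarrow> c < n \<Longrightarrow>
      D * P $$ (j,c) = (\<Sum>k<m. P\<pi> $$ (j,k) * (\<Sum>i<m. adj $$ (k,i) * A $$ (i,c)))"
  proof -
    fix j c assume jc: "j < m" "c < n"
    have "D * P $$ (j,c) = (D \<cdot>\<^sub>m P) $$ (j,c)" using Pc jc by simp
    also have "\<dots> = (\<Sum>k<m. P\<pi> $$ (j,k) * (\<Sum>i<m. adj $$ (k,i) * A $$ (i,c)))"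
      unfolding PA using P\<pi>c adjc A jc by (simp add: scalar_prod_def atLeast0LessThan)
    finally show "D * P $$ (j,c) = (\<Sum>k<m. P\<pi> $$ (j,k) * (\<Sum>i<m. adj $$ (k,i) * A $$ (i,c)))" .
  qed
  have UAe: "\<And>j c. j < m \<Longrightarrow> c < n \<Longrightarrow> P $$ (j,c) = (\<Sum>i<m. U $$ (j,i) * A $$ (i,c))"
  proof -
    fix j c assume jc: "j < m" "c < n"
    show "P $$ (j,c) = (\<Sum>i<m. U $$ (j,i) * A $$ (i,c))"
      unfolding UA[symmetric] using Uc A jc by (simp add: scalar_prod_def atLeast0LessThan)
  qed
  have rowA: "\<And>l. l < m \<Longrightarrow> row A l \<noteq> 0\<^sub>v n"
  proof -
    fix l assume l: "l < m"
    show "row A l \<noteq> 0\<^sub>v n"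
    proof
      assume z: "row A l = 0\<^sub>v n"
      have "(A\<pi> * adj) $$ (l,l) = (\<Sum>k = 0..<m. A\<pi> $$ (l,k) * adj $$ (k,l))"
        using A\<pi>c adjc l by (simp add: scalar_prod_def)
      also have "\<dots> = 0"
      proof (rule sum.neutral, intro ballI)
        fix k assume k: "k \<in> {0..<m}"
        have "A\<pi> $$ (l,k) = row A l $ piv k" using A\<pi>e l pivn A k by simp
        then show "A\<pi> $$ (l,k) * adj $$ (k,l) = 0" using z pivn k by simp
      qed
      finally show False using Aadj l DnZ by simp
    qed
  qed
  have colA: "\<And>k. k < m \<Longrightarrow> col A (piv k) \<noteq> 0\<^sub>v m"
  proof -
    fix k assume k: "k < m"
    show "col A (piv k) \<noteq> 0\<^sub>v m"
    proof
      assume z: "col A (piv k) = 0\<^sub>v m"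
      have "(adj * A\<pi>) $$ (k,k) = (\<Sum>i = 0..<m. adj $$ (k,i) * A\<pi> $$ (i,k))"
        using A\<pi>c adjc k by (simp add: scalar_prod_def)
      also have "\<dots> = 0"
      proof (rule sum.neutral, intro ballI)
        fix i assume i: "i \<in> {0..<m}"
        have "A\<pi> $$ (i,k) = col A (piv k) $ i" using A\<pi>e k pivn A i by simp
        then show "adj $$ (k,i) * A\<pi> $$ (i,k) = 0" using z i by simp
      qed
      finally show False using adjA k DnZ by simp
    qed
  qed
  define rn where "rn l = vdn (row A l)" for l
  define cn where "cn k = vdn (col A (piv k))" for k
  define cA where "cA c = vdn (col A c)" for c
  have Arn: "\<And>l c. l < m \<Longrightarrow> c < n \<Longrightarrow> degree (A $$ (l,c)) \<le> rn l"
  proof -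
    fix l c assume lc: "l < m" "c < n"
    have "degree (row A l $ c) \<le> vdn (row A l)" by (rule vdn_ge) (use A lc in simp)
    then show "degree (A $$ (l,c)) \<le> rn l" using A lc by (simp add: rn_def)
  qed
  have AcA: "\<And>l c. l < m \<Longrightarrow> c < n \<Longrightarrow> degree (A $$ (l,c)) \<le> cA c"
  proof -
    fix l c assume lc: "l < m" "c < n"
    have "degree (col A c $ l) \<le> vdn (col A c)" by (rule vdn_ge) (use A lc in simp)
    then show "degree (A $$ (l,c)) \<le> cA c" using A lc by (simp add: cA_def)
  qed
  have Acn: "\<And>l k. l < m \<Longrightarrow> k < m \<Longrightarrow> degree (A\<pi> $$ (l,k)) \<le> cn k"
    using AcA A\<pi>e pivn unfolding cn_def cA_def by simp
  have Prow: "\<And>j k. j < m \<Longrightarrow> k < m \<Longrightarrow> degree (P\<pi> $$ (j,k)) \<le> \<delta>"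
    using colle dle P\<pi>e by (metis order_trans)
  have Udeg: "\<And>j i. j < m \<Longrightarrow> i < m \<Longrightarrow> degree (U $$ (j,i)) \<le> (\<Sum>l\<in>{0..<m} - {i}. rn l)
      \<and> degree (U $$ (j,i)) \<le> (\<Sum>k = 0..<m. cn k)"
  proof -
    fix j i assume ji: "j < m" "i < m"
    define B where "B = mat m m (\<lambda>(l,k). if l = i then P\<pi> $$ (j,k) else A\<pi> $$ (l,k))"
    have Bc: "B \<in> carrier_mat m m" by (simp add: B_def)
    have DUB: "D * U $$ (j,i) = det B"
      unfolding DU[OF ji] B_def using adj_row_det[OF A\<pi>c ji(2), of "\<lambda>k. P\<pi> $$ (j,k)"] by (simp add: adj_def)
    have b1: "degree (det B) \<le> \<delta> + (\<Sum>l\<in>{0..<m} - {i}. rn l)"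
    proof (rule degree_det_bound[OF Bc, where f="\<lambda>l k. if l = i then \<delta> else rn l"])
      fix l k assume lk: "l < m" "k < m"
      show "degree (B $$ (l,k)) \<le> (if l = i then \<delta> else rn l)"
        using Prow[OF ji(1) lk(2)] Arn[OF lk(1) pivn[OF lk(2)]] A\<pi>e[OF lk] lk by (simp add: B_def)
    next
      fix p :: "nat \<Rightarrow> nat" assume "p permutes {0..<m}"
      have "(\<Sum>l = 0..<m. if l = i then \<delta> else rn l) = \<delta> + (\<Sum>l\<in>{0..<m} - {i}. rn l)"
        by (subst sum.remove[of _ i]) (use ji in \<open>auto intro!: sum.cong\<close>)
      then show "(\<Sum>l = 0..<m. if l = i then \<delta> else rn l) \<le> \<delta> + (\<Sum>l\<in>{0..<m} - {i}. rn l)" by simp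
    qed
    have b2: "degree (det B) \<le> \<delta> + (\<Sum>k = 0..<m. cn k)"
    proof (rule degree_det_bound[OF Bc, where f="\<lambda>l k. if l = i then \<delta> else cn k"])
      fix l k assume lk: "l < m" "k < m"
      show "degree (B $$ (l,k)) \<le> (if l = i then \<delta> else cn k)"
        using Prow[OF ji(1) lk(2)] Acn[OF lk] lk by (simp add: B_def)
    next
      fix p :: "nat \<Rightarrow> nat" assume p: "p permutes {0..<m}"
      have "(\<Sum>l = 0..<m. if l = i then \<delta> else cn (p l)) \<le> (\<Sum>l = 0..<m. (if l = i then \<delta> else 0) + cn (p l))"
        by (rule sum_mono) auto
      also have "\<dots> = \<delta> + (\<Sum>l = 0..<m. cn (p l))" using ji by (simp add: sum.distrib)
      also have "\<dots> = \<delta> + (\<Sum>k = 0..<m. cn k)" using sum_permute[OF p, of cn] by simp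
      finally show "(\<Sum>l = 0..<m. if l = i then \<delta> else cn (p l)) \<le> \<delta> + (\<Sum>k = 0..<m. cn k)" .
    qed
    show "degree (U $$ (j,i)) \<le> (\<Sum>l\<in>{0..<m} - {i}. rn l) \<and> degree (U $$ (j,i)) \<le> (\<Sum>k = 0..<m. cn k)"
    proof (cases "U $$ (j,i) = 0")
      case False
      then have "degree (det B) = \<delta> + degree (U $$ (j,i))"
        using DUB[symmetric] DnZ degD by (simp add: degree_mult_eq)
      then show ?thesis using b1 b2 by simp
    qed simp
  qed
  have degAcn: "\<delta> \<le> (\<Sum>k = 0..<m. cn k)"
  proof -
    have "degree (det A\<pi>) \<le> (\<Sum>k = 0..<m. cn k)"
    proof (rule degree_det_bound[OF A\<pi>c, where f="\<lambda>l k. cn k"])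
      fix l k assume lk: "l < m" "k < m"
      show "degree (A\<pi> $$ (l,k)) \<le> cn k" using Acn[OF lk] .
    next
      fix p :: "nat \<Rightarrow> nat" assume p: "p permutes {0..<m}"
      show "(\<Sum>l = 0..<m. cn (p l)) \<le> (\<Sum>k = 0..<m. cn k)" using sum_permute[OF p, of cn] by simp
    qed
    then show ?thesis using degA by simp
  qed
  have Pdeg_row: "\<And>j c. j < m \<Longrightarrow> c < n \<Longrightarrow> degree (P $$ (j,c)) \<le> (\<Sum>l = 0..<m. rn l)"
  proof -
    fix j c assume jc: "j < m" "c < n"
    have "degree (\<Sum>i<m. U $$ (j,i) * A $$ (i,c)) \<le> (\<Sum>l = 0..<m. rn l)"
    proof (rule degree_sum_le)
      fix i assume "i \<in> {..<m}"
      then have i: "i < m" by simp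
      have "degree (U $$ (j,i) * A $$ (i,c)) \<le> degree (U $$ (j,i)) + degree (A $$ (i,c))"
        by (rule degree_mult_le)
      also have "\<dots> \<le> (\<Sum>l\<in>{0..<m} - {i}. rn l) + rn i"
        using Udeg[OF jc(1) i] Arn[OF i jc(2)] by simp
      also have "\<dots> = (\<Sum>l = 0..<m. rn l)" using sum.remove[of "{0..<m}" i rn] i by simp
      finally show "degree (U $$ (j,i) * A $$ (i,c)) \<le> (\<Sum>l = 0..<m. rn l)" .
    qed simp
    then show "degree (P $$ (j,c)) \<le> (\<Sum>l = 0..<m. rn l)" using UAe[OF jc] by simp
  qed
  have Pdeg_col: "\<And>j c. j < m \<Longrightarrow> c < n \<Longrightarrow> degree (P $$ (j,c)) \<le> cA c + (\<Sum>k = 0..<m. cn k)"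
  proof -
    fix j c assume jc: "j < m" "c < n"
    have Ck: "degree (\<Sum>i<m. adj $$ (k,i) * A $$ (i,c)) \<le> cA c + (\<Sum>k = 0..<m. cn k)" if k: "k < m" for k
    proof -
      define C where "C = mat m m (\<lambda>(l,q). if q = k then A $$ (l,c) else A\<pi> $$ (l,q))"
      have Cc: "C \<in> carrier_mat m m" by (simp add: C_def)
      have e: "(\<Sum>i<m. adj $$ (k,i) * A $$ (i,c)) = det C"
        unfolding C_def using adj_col_det[OF A\<pi>c k, of "\<lambda>i. A $$ (i,c)"] by (simp add: adj_def)
      have "degree (det C) \<le> cA c + (\<Sum>k = 0..<m. cn k)"
      proof (rule degree_det_bound[OF Cc, where f="\<lambda>l q. if q = k then cA c else cn q"])
        fix l q assume lq: "l < m" "q < m"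
        show "degree (C $$ (l,q)) \<le> (if q = k then cA c else cn q)"
          using AcA[OF lq(1) jc(2)] Acn[OF lq] lq by (simp add: C_def)
      next
        fix p :: "nat \<Rightarrow> nat" assume p: "p permutes {0..<m}"
        have "(\<Sum>l = 0..<m. if p l = k then cA c else cn (p l)) = (\<Sum>q = 0..<m. if q = k then cA c else cn q)"
          using sum_permute[OF p, of "\<lambda>q. if q = k then cA c else cn q"] by simp
        also have "\<dots> \<le> (\<Sum>q = 0..<m. (if q = k then cA c else 0) + cn q)"
          by (rule sum_mono) auto
        also have "\<dots> = cA c + (\<Sum>k = 0..<m. cn k)" using k by (simp add: sum.distrib)
        finally show "(\<Sum>l = 0..<m. if p l = k then cA c else cn (p l)) \<le> cA c + (\<Sum>k = 0..<m. cn k)" .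
      qed
      then show ?thesis using e by simp
    qed
    have "degree (D * P $$ (j,c)) \<le> \<delta> + (cA c + (\<Sum>k = 0..<m. cn k))"
      unfolding DP[OF jc]
    proof (rule degree_sum_le)
      fix k assume "k \<in> {..<m}"
      then have k: "k < m" by simp
      have "degree (P\<pi> $$ (j,k) * (\<Sum>i<m. adj $$ (k,i) * A $$ (i,c)))
          \<le> degree (P\<pi> $$ (j,k)) + degree (\<Sum>i<m. adj $$ (k,i) * A $$ (i,c))"
        by (rule degree_mult_le)
      also have "\<dots> \<le> \<delta> + (cA c + (\<Sum>k = 0..<m. cn k))"
        using Prow[OF jc(1) k] Ck[OF k] by simp
      finally show "degree (P\<pi> $$ (j,k) * (\<Sum>i<m. adj $$ (k,i) * A $$ (i,c))) \<le> \<delta> + (cA c + (\<Sum>k = 0..<m. cn k))" .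
    qed simp
    then show "degree (P $$ (j,c)) \<le> cA c + (\<Sum>k = 0..<m. cn k)"
      using DnZ degD by (cases "P $$ (j,c) = 0") (simp_all add: degree_mult_eq)
  qed
  define NZ where "NZ = {c. c < n \<and> col A c \<noteq> 0\<^sub>v m}"
  have finNZ: "finite NZ" by (simp add: NZ_def)
  have setpi: "set \<pi> = piv ` {0..<m}" by (simp add: \<pi>)
  have injpiv: "inj_on piv {0..<m}"
  proof (rule inj_onI)
    fix x y assume "x \<in> {0..<m}" "y \<in> {0..<m}" "piv x = piv y"
    then show "x = y" using mono by (metis atLeastLessThan_iff less_irrefl linorder_neqE_nat)
  qed
  have sumcn: "(\<Sum>k = 0..<m. cn k) = (\<Sum>c\<in>set \<pi>. cA c)"
    unfolding setpi by (subst sum.reindex[OF injpiv]) (simp add: cn_def cA_def)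
  have piNZ: "set \<pi> \<subseteq> NZ" using pivn colA by (auto simp: setpi NZ_def)
  have sumNZ2: "(\<Sum>k = 0..<m. cn k) \<le> (\<Sum>c\<in>NZ. cA c)"
    unfolding sumcn by (rule sum_mono2[OF finNZ piNZ]) simp
  have Pdeg_nz: "\<And>j c. j < m \<Longrightarrow> c < n \<Longrightarrow> degree (P $$ (j,c)) \<le> (\<Sum>c\<in>NZ. cA c)"
  proof -
    fix j c assume jc: "j < m" "c < n"
    show "degree (P $$ (j,c)) \<le> (\<Sum>c\<in>NZ. cA c)"
    proof (cases "c \<in> set \<pi>")
      case True
      then obtain k where k: "k < m" "c = piv k" unfolding setpi by auto
      have "degree (P $$ (j,c)) \<le> \<delta>" using colle[OF jc(1) k(1)] dle[OF k(1)] k(2) by simp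
      then show ?thesis using degAcn sumNZ2 by simp
    next
      case nin: False
      show ?thesis
      proof (cases "col A c = 0\<^sub>v m")
        case True
        have "P $$ (j,c) = 0" unfolding UAe[OF jc]
        proof (rule sum.neutral, intro ballI)
          fix i assume "i \<in> {..<m}"
          then have "A $$ (i,c) = col A c $ i" using A jc by simp
          then show "U $$ (j,i) * A $$ (i,c) = 0" using True \<open>i \<in> {..<m}\<close> by simp
        qed
        then show ?thesis by simp
      next
        case False
        then have cNZ: "c \<in> NZ" using jc by (simp add: NZ_def)
        have "cA c + (\<Sum>k = 0..<m. cn k) = (\<Sum>c\<in>insert c (set \<pi>). cA c)"
          unfolding sumcn using nin by simp
        also have "\<dots> \<le> (\<Sum>c\<in>NZ. cA c)" by (rule sum_mono2[OF finNZ]) (use piNZ cNZ in auto)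
        finally show ?thesis using Pdeg_col[OF jc] by simp
      qed
    qed
  qed
  have Ucol: "\<forall>i<m. vdeg (col U i) \<le> sum_rdeg A - vdeg (row A i)"
  proof (intro allI impI)
    fix i assume i: "i < m"
    have "vdeg (col U i) \<le> ereal (real (\<Sum>l\<in>{0..<m} - {i}. rn l))"
      by (rule vdeg_le_nat) (use Uc Udeg i in simp)
    also have "\<dots> = sum_rdeg A - vdeg (row A i)"
    proof -
      have s1: "sum_rdeg A = ereal (real (\<Sum>l<m. rn l))" using sum_rdeg_eq[OF A rowA] by (simp add: rn_def)
      have s2: "vdeg (row A i) = ereal (real (rn i))" using vdeg_eq[of "row A i"] rowA[OF i] A i by (simp add: rn_def)
      have s3: "(\<Sum>l<m. rn l) = rn i + (\<Sum>l\<in>{0..<m} - {i}. rn l)"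
        using sum.remove[of "{0..<m}" i rn] i by (simp add: atLeast0LessThan)
      show ?thesis unfolding s1 s2 s3 by simp
    qed
    finally show "vdeg (col U i) \<le> sum_rdeg A - vdeg (row A i)" .
  qed
  have Umdeg: "mdeg U \<le> sum_cdeg A\<pi>"
  proof -
    have colpi: "\<And>q. q < m \<Longrightarrow> col A\<pi> q = col A (piv q)"
      using A\<pi>c A A\<pi>e pivn by (auto intro!: eq_vecI)
    have "sum_cdeg A\<pi> = ereal (real (\<Sum>q<m. vdn (col A\<pi> q)))"
      by (rule sum_cdeg_eq[OF A\<pi>c]) (simp add: colpi colA)
    also have "(\<Sum>q<m. vdn (col A\<pi> q)) = (\<Sum>k = 0..<m. cn k)"
      by (simp add: colpi cn_def atLeast0LessThan)
    finally have e: "sum_cdeg A\<pi> = ereal (real (\<Sum>k = 0..<m. cn k))" .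
    show ?thesis unfolding e by (rule mdeg_le_nat) (use Uc Udeg in simp)
  qed
  have PR: "mdeg P \<le> sum_rdeg A"
  proof -
    have e: "sum_rdeg A = ereal (real (\<Sum>l = 0..<m. rn l))"
      using sum_rdeg_eq[OF A rowA] by (simp add: rn_def atLeast0LessThan)
    show ?thesis unfolding e by (rule mdeg_le_nat) (use Pc Pdeg_row in simp)
  qed
  have PC: "mdeg P \<le> sum_cdeg (nonzero_cols A)"
  proof -
    have e: "sum_cdeg (nonzero_cols A) = ereal (real (\<Sum>c\<in>NZ. cA c))"
      using sum_cdeg_nonzero_cols[OF A] by (simp add: NZ_def cA_def)
    show ?thesis unfolding e by (rule mdeg_le_nat) (use Pc Pdeg_nz in simp)
  qed
  have PM: "mdeg P \<le> min (sum_rdeg A) (sum_cdeg (nonzero_cols A))" using PR PC by simp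
  have last: "min (sum_rdeg A) (sum_cdeg (nonzero_cols A)) \<le> ereal (real m) * mdeg A"
    using sum_rdeg_le_m[OF A rowA] min.coboundedI1 by blast
  show ?thesis
    unfolding A\<pi>_def[symmetric] P\<pi>_def[symmetric]
    using detA popform Uc UA\<pi> unimod UA uniq Ucol Umdeg partI PM last by blast
qed


end
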